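(* Let $\mathcal P$ be a compact subset of $\mathcal W$ and let $P(1),P(2),P(3),\ldots$ be a sequence of matrices from $\mathcal P$. Suppose $j_1<j_2<\cdots$ is an infinite increasing sequence of indices such that each $P(j_r)$ is a Sarymsakov matrix (i.e., $P(j_r)\in\mathcal S_1$) and the set $\bigcup_{r\ge1}\{P(j_r)\}$ is compact. If there exists an integer $T$ such that $j_{r+1}-j_r\le T$ for all $r\ge1$, then $P(k)\cdots P(2)P(1)$ converges as $k\to\infty$ to a rank-one matrix of the form $\mathbf 1c^T$ with $c_i\ge0$ and $\sum_i c_i=1$.
   Context: Let $\mathcal N=\{1,\ldots,n\}$; all matrices are $n\times n$. A matrix is stochastic if it is entrywise nonnegative with row sums $1$. For stochastic $P$ and $\mathcal A\subseteq\mathcal N$, $F_P(\mathcal A)=\{j:\ p_{ij}>0\text{ for some } i\in\mathcal A\}$. $\mathcal S_1$ (Sarymsakov matrices) is the set of stochastic $P$ such that for any disjoint nonempty $\mathcal A,\tilde{\mathcal A}\subseteq\mathcal N$, either $F_P(\mathcal A)\cap F_P(\tilde{\mathcal A})\neq\emptyset$, or $F_P(\mathcal A)\cap F_P(\tilde{\mathcal A})=\emptyset$ and $|F_P(\mathcal A)\cup F_P(\tilde{\mathcal A})|>|\mathcal A\cup\tilde{\mathcal A}|$. $\mathcal W$ is the set of stochastic $P$ such that for any disjoint nonempty $\mathcal A,\tilde{\mathcal A}\subseteq\mathcal N$, either $F_P(\mathcal A)\cap F_P(\tilde{\mathcal A})\neq\emptyset$, or $F_P(\mathcal A)\cap F_P(\tilde{\mathcal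 A})=\emptyset$ and $|F_P(\mathcal A)\cup F_P(\tilde{\mathcal A})|\ge|\mathcal A\cup\tilde{\mathcal A}|$. $\mathbf 1$ is the all-ones column vector. *)

theory Defs
  imports "HOL-Analysis.Analysis"
begin

text \<open>n x n real matrices are represented as real^'n^'n, with index type 'n finite
  (playing the role of N = {1..n}).\<close>

definition stochastic :: "real^'n::finite^'n \<Rightarrow> bool" where
  "stochastic P \<longleftrightarrow> (\<forall>i j. P $ i $ j \<ge> 0) \<and> (\<forall>i. (\<Sum>j\<in>UNIV. P $ i $ j) = 1)"

definition Fset :: "real^'n::finite^'n \<Rightarrow> 'n set \<Rightarrow> 'n set" where
  "Fset P A = {j. \<exists>i\<in>A. P $ i $ j > 0}"

definition sarymsakov :: "real^'n::finite^'n \<Rightarrow> bool" where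
  "sarymsakov P \<longleftrightarrow> stochastic P \<and>
     (\<forall>A B. A \<noteq> {} \<and> B \<noteq> {} \<and> A \<inter> B = {} \<longrightarrow>
        Fset P A \<inter> Fset P B \<noteq> {} \<or>
        (Fset P A \<inter> Fset P B = {} \<and> card (Fset P A \<union> Fset P B) > card (A \<union> B)))"

definition classW :: "real^'n::finite^'n \<Rightarrow> bool" where
  "classW P \<longleftrightarrow> stochastic P \<and>
     (\<forall>A B. A \<noteq> {} \<and> B \<noteq> {} \<and> A \<inter> B = {} \<longrightarrow>
        Fset P A \<inter> Fset P B \<noteq> {} \<or>
        (Fset P A \<inter> Fset P B = {} \<and> card (Fset P A \<union> Fset P B) \<ge> card (A \<union> B)))"

fun lprod :: "(nat \<Rightarrow> real^'n::finite^'n) \<Rightarrow> nat \<Rightarrow> real^'n^'n" where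
  "lprod P 0 = mat 1"
| "lprod P (Suc k) = P (Suc k) ** lprod P k"

end

theory Submission
  imports Defs
begin

lemma mm_entry: "(X ** Y) $ i $ k = (\<Sum>m\<in>UNIV. X $ i $ m * Y $ m $ k)"
  by (simp add: matrix_matrix_mult_def)

lemma stoch_mult: assumes "stochastic X" "stochastic Y" shows "stochastic (X ** Y)"
proof -
  have nn: "\<And>i k. (X ** Y) $ i $ k \<ge> 0" using assms unfolding stochastic_def mm_entry
    by (intro sum_nonneg mult_nonneg_nonneg) auto
  have "(\<Sum>k\<in>UNIV. (X ** Y) $ i $ k) = 1" for i
  proof -
    have "(\<Sum>k\<in>UNIV. (X ** Y) $ i $ k) = (\<Sum>k\<in>UNIV. \<Sum>m\<in>UNIV. X $ i $ m * Y $ m $ k)"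
      unfolding mm_entry ..
    also have "\<dots> = (\<Sum>m\<in>UNIV. \<Sum>k\<in>UNIV. X $ i $ m * Y $ m $ k)"
      by (rule sum.swap)
    also have "\<dots> = (\<Sum>m\<in>UNIV. X $ i $ m * (\<Sum>k\<in>UNIV. Y $ m $ k))"
      by (simp add: sum_distrib_left)
    also have "\<dots> = 1" using assms unfolding stochastic_def by simp
    finally show ?thesis .
  qed
  with nn show ?thesis unfolding stochastic_def by auto
qed

lemma stoch_mat1: "stochastic (mat 1 :: real^'n::finite^'n)"
  unfolding stochastic_def mat_def by (auto simp: if_distrib cong: if_cong)

lemma stoch_le1: assumes "stochastic X" shows "X $ i $ k \<le> 1"
proof -
  have "X $ i $ k \<le> (\<Sum>m\<in>UNIV. X $ i $ m)" using assms unfolding stochastic_def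
    by (intro member_le_sum) auto
  thus ?thesis using assms unfolding stochastic_def by auto
qed

lemma stoch_pos: assumes "stochastic X" shows "\<exists>k. X $ i $ k > 0"
proof (rule ccontr)
  assume "\<not> ?thesis"
  hence "\<forall>k. X $ i $ k \<le> 0" by (simp add: not_less)
  hence "\<forall>k. X $ i $ k = 0" using assms unfolding stochastic_def by (simp add: order_antisym)
  hence "(\<Sum>k\<in>UNIV. X $ i $ k) = 0" by simp
  thus False using assms unfolding stochastic_def by auto
qed
lemma Fset_mult: assumes "stochastic X" "stochastic Y"
  shows "Fset (X ** Y) A = Fset Y (Fset X A)"
proof -
  have nX: "\<And>i m. X $ i $ m \<ge> 0" and nY: "\<And>i m. Y $ i $ m \<ge> 0"
    using assms unfolding stochastic_def by auto
  have "(X ** Y) $ i $ k > 0 \<longleftrightarrow> (\<exists>m. X $ i $ m > 0 \<and> Y $ m $ k > 0)" for i k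
  proof
    assume h: "(X ** Y) $ i $ k > 0"
    have "\<exists>m. X $ i $ m * Y $ m $ k > 0"
    proof (rule ccontr)
      assume "\<not> ?thesis"
      hence "\<forall>m. X $ i $ m * Y $ m $ k \<le> 0" by (simp add: not_less)
      hence "(\<Sum>m\<in>UNIV. X $ i $ m * Y $ m $ k) \<le> 0" by (simp add: sum_nonpos)
      with h show False by (simp add: mm_entry)
    qed
    then obtain m where m: "X $ i $ m * Y $ m $ k > 0" by blast
    have "X $ i $ m \<noteq> 0" "Y $ m $ k \<noteq> 0" using m by auto
    hence "X $ i $ m > 0" "Y $ m $ k > 0" using nX[of i m] nY[of m k] by auto
    thus "\<exists>m. X $ i $ m > 0 \<and> Y $ m $ k > 0" by blast
  next
    assume "\<exists>m. X $ i $ m > 0 \<and> Y $ m $ k > 0"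
    then obtain m where m: "X $ i $ m > 0" "Y $ m $ k > 0" by auto
    have "X $ i $ m * Y $ m $ k \<le> (\<Sum>m\<in>UNIV. X $ i $ m * Y $ m $ k)"
      by (rule member_le_sum) (auto intro: mult_nonneg_nonneg nX nY)
    moreover have "X $ i $ m * Y $ m $ k > 0" using m by simp
    ultimately show "(X ** Y) $ i $ k > 0" by (simp add: mm_entry)
  qed
  thus ?thesis unfolding Fset_def by auto
qed

lemma Fset_ne: assumes "stochastic X" "A \<noteq> {}" shows "Fset X A \<noteq> {}"
proof -
  obtain a where a: "a \<in> A" using assms(2) by blast
  obtain k where "X $ a $ k > 0" using stoch_pos[OF assms(1)] by blast
  hence "k \<in> Fset X A" using a unfolding Fset_def by blast
  thus ?thesis by blast
qed

definition expd :: "nat \<Rightarrow> real^'n::finite^'n \<Rightarrow> bool" where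
  "expd k M \<longleftrightarrow> (\<forall>A B. A \<noteq> {} \<and> B \<noteq> {} \<and> A \<inter> B = {} \<longrightarrow>
        Fset M A \<inter> Fset M B \<noteq> {} \<or> card (Fset M A \<union> Fset M B) \<ge> card (A \<union> B) + k)"

lemma expd_W: fixes M :: "real^'n::finite^'n" assumes "classW M" shows "expd 0 M"
  unfolding expd_def
proof (intro allI impI)
  fix A B :: "'n set" assume h: "A \<noteq> {} \<and> B \<noteq> {} \<and> A \<inter> B = {}"
  hence "Fset M A \<inter> Fset M B \<noteq> {} \<or> (Fset M A \<inter> Fset M B = {} \<and> card (Fset M A \<union> Fset M B) \<ge> card (A \<union> B))"
    using assms unfolding classW_def by blast
  thus "Fset M A \<inter> Fset M B \<noteq> {} \<or> card (A \<union> B) + 0 \<le> card (Fset M A \<union> Fset M B)" by simp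
qed

lemma expd_S: fixes M :: "real^'n::finite^'n" assumes "sarymsakov M" shows "expd 1 M"
  unfolding expd_def
proof (intro allI impI)
  fix A B :: "'n set" assume h: "A \<noteq> {} \<and> B \<noteq> {} \<and> A \<inter> B = {}"
  hence "Fset M A \<inter> Fset M B \<noteq> {} \<or> (Fset M A \<inter> Fset M B = {} \<and> card (Fset M A \<union> Fset M B) > card (A \<union> B))"
    using assms unfolding sarymsakov_def by blast
  thus "Fset M A \<inter> Fset M B \<noteq> {} \<or> card (A \<union> B) + 1 \<le> card (Fset M A \<union> Fset M B)" by linarith
qed

lemma expd_mat1: "expd 0 (mat 1 :: real^'n::finite^'n)"
proof -
  have "Fset (mat 1 :: real^'n^'n) A = A" for A unfolding Fset_def mat_def by auto
  thus ?thesis unfolding expd_def by auto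
qed

lemma expd_mult: fixes X Y :: "real^'n::finite^'n" assumes "stochastic X" "stochastic Y" "expd k X" "expd m Y"
  shows "expd (k + m) (X ** Y)"
  unfolding expd_def
proof (intro allI impI)
  fix A B :: "'n set" assume h: "A \<noteq> {} \<and> B \<noteq> {} \<and> A \<inter> B = {}"
  let ?A = "Fset X A" and ?B = "Fset X B"
  show "Fset (X ** Y) A \<inter> Fset (X ** Y) B \<noteq> {} \<or> card (A \<union> B) + (k + m) \<le> card (Fset (X ** Y) A \<union> Fset (X ** Y) B)"
  proof (cases "?A \<inter> ?B = {}")
    case False
    then obtain z where z: "z \<in> ?A" "z \<in> ?B" by auto
    obtain l where "Y $ z $ l > 0" using stoch_pos[OF assms(2)] by blast
    hence "l \<in> Fset Y ?A" "l \<in> Fset Y ?B" using z unfolding Fset_def by auto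
    thus ?thesis unfolding Fset_mult[OF assms(1,2)] by auto
  next
    case True
    hence c1: "card (?A \<union> ?B) \<ge> card (A \<union> B) + k" using assms(3) h unfolding expd_def by blast
    have "?A \<noteq> {}" "?B \<noteq> {}" using h Fset_ne assms(1) by auto
    hence "Fset Y ?A \<inter> Fset Y ?B \<noteq> {} \<or> card (Fset Y ?A \<union> Fset Y ?B) \<ge> card (?A \<union> ?B) + m"
      using assms(4) True unfolding expd_def by blast
    hence "Fset Y ?A \<inter> Fset Y ?B \<noteq> {} \<or> card (Fset Y ?A \<union> Fset Y ?B) \<ge> card (A \<union> B) + (k + m)"
      using c1 by linarith
    thus ?thesis unfolding Fset_mult[OF assms(1,2)] .
  qed
qed


lemma expd_scr: assumes "stochastic M" "expd CARD('n) (M :: real^'n::finite^'n)"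
  shows "\<exists>l. M $ i $ l > 0 \<and> M $ k $ l > 0"
proof (cases "i = k")
  case True thus ?thesis using stoch_pos[OF assms(1)] by auto
next
  case False
  have "card (Fset M {i} \<union> Fset M {k}) \<le> CARD('n)" by (rule card_mono) auto
  moreover have "card ({i} \<union> {k}) = 2" using False by auto
  moreover have "Fset M {i} \<inter> Fset M {k} \<noteq> {} \<or> card (Fset M {i} \<union> Fset M {k}) \<ge> card ({i} \<union> {k}) + CARD('n)"
    using assms(2) False unfolding expd_def by blast
  ultimately have "Fset M {i} \<inter> Fset M {k} \<noteq> {}" by linarith
  thus ?thesis unfolding Fset_def by auto
qed




definition mprod :: "(real^'n::finite^'n) set \<Rightarrow> (real^'n^'n) set \<Rightarrow> (real^'n^'n) set" where
  "mprod X Y = (\<lambda>p. fst p ** snd p) ` (X \<times> Y)"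

lemma mprodI: "a \<in> X \<Longrightarrow> b \<in> Y \<Longrightarrow> a ** b \<in> mprod X Y"
  unfolding mprod_def by (rule image_eqI[of _ _ "(a,b)"]) auto

lemma mprodE: "M \<in> mprod X Y \<Longrightarrow> (\<And>a b. a \<in> X \<Longrightarrow> b \<in> Y \<Longrightarrow> M = a ** b \<Longrightarrow> thesis) \<Longrightarrow> thesis"
  unfolding mprod_def by auto

lemma cont_mm: "continuous_on S (\<lambda>p::(real^'n::finite^'n) \<times> (real^'n^'n). fst p ** snd p)"
proof -
  have eq: "(\<lambda>p::(real^'n^'n) \<times> (real^'n^'n). fst p ** snd p) =
      (\<lambda>p. \<chi> i k. \<Sum>m\<in>UNIV. fst p $ i $ m * snd p $ m $ k)"
    by (rule ext) (simp add: matrix_matrix_mult_def)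
  show ?thesis unfolding eq
    by (intro continuous_intros)
qed

lemma compact_mprod: "compact X \<Longrightarrow> compact Y \<Longrightarrow> compact (mprod X Y)"
  unfolding mprod_def by (intro compact_continuous_image cont_mm compact_Times)

fun Kset :: "(real^'n::finite^'n) set \<Rightarrow> (real^'n^'n) set \<Rightarrow> nat \<Rightarrow> nat \<Rightarrow> (real^'n^'n) set" where
  "Kset Q S 0 s = (if s = 0 then {mat 1} else {})"
| "Kset Q S (Suc L) 0 = mprod Q (Kset Q S L 0)"
| "Kset Q S (Suc L) (Suc s) = mprod Q (Kset Q S L (Suc s)) \<union> mprod S (Kset Q S L s)"

lemma compact_Kset: "compact Q \<Longrightarrow> compact S \<Longrightarrow> compact (Kset Q S L s)"
  by (induction Q S L s rule: Kset.induct) (auto intro!: compact_mprod compact_Un)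

lemma Kset_prop:
  assumes Q: "\<forall>M\<in>Q. stochastic M \<and> expd 0 M" and S: "\<forall>M\<in>S. stochastic M \<and> expd 1 M"
  shows "M \<in> Kset Q S L s \<Longrightarrow> stochastic M \<and> expd s M"
proof (induction L arbitrary: s M)
  case 0
  then show ?case using stoch_mat1 expd_mat1 by (auto split: if_splits)
next
  case (Suc L)
  show ?case
  proof (cases s)
    case 0
    with Suc.prems obtain a b where ab: "a \<in> Q" "b \<in> Kset Q S L 0" "M = a ** b" by (auto elim: mprodE)
    have "stochastic b \<and> expd 0 b" using Suc.IH ab(2) by blast
    moreover have "stochastic a \<and> expd 0 a" using Q ab(1) by blast
    ultimately show ?thesis using ab(3) 0 stoch_mult expd_mult[of a b 0 0] by auto
  next
    case (Suc s')
    with Suc.prems have "M \<in> mprod Q (Kset Q S L s) \<or> M \<in> mprod S (Kset Q S L s')" by auto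
    then show ?thesis
    proof
      assume "M \<in> mprod Q (Kset Q S L s)"
      then obtain a b where ab: "a \<in> Q" "b \<in> Kset Q S L s" "M = a ** b" by (auto elim: mprodE)
      have "stochastic b \<and> expd s b" using Suc.IH ab(2) by blast
      moreover have "stochastic a \<and> expd 0 a" using Q ab(1) by blast
      ultimately show ?thesis using ab(3) stoch_mult expd_mult[of a b 0 s] by auto
    next
      assume "M \<in> mprod S (Kset Q S L s')"
      then obtain a b where ab: "a \<in> S" "b \<in> Kset Q S L s'" "M = a ** b" by (auto elim: mprodE)
      have "stochastic b \<and> expd s' b" using Suc.IH ab(2) by blast
      moreover have "stochastic a \<and> expd 1 a" using S ab(1) by blast
      ultimately show ?thesis using ab(3) \<open>s = Suc s'\<close> stoch_mult expd_mult[of a b 1 s'] by auto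
    qed
  qed
qed




lemma contr:
  fixes M :: "real^'n::finite^'n" and x :: "'n \<Rightarrow> real"
  assumes st: "stochastic M" and bd: "\<forall>l. a \<le> x l \<and> x l \<le> b"
    and c: "c \<le> (\<Sum>l\<in>UNIV. min (M$i$l) (M$k$l))"
  shows "(\<Sum>l\<in>UNIV. M$i$l * x l) - (\<Sum>l\<in>UNIV. M$k$l * x l) \<le> (1-c)*(b-a)"
proof -
  define m where "m l = min (M$i$l) (M$k$l)" for l
  define s where "s = (\<Sum>l\<in>UNIV. m l)"
  have r1: "(\<Sum>l\<in>UNIV. M$i$l) = 1" "(\<Sum>l\<in>UNIV. M$k$l) = 1" using st unfolding stochastic_def by auto
  have "(\<Sum>l\<in>UNIV. M$i$l * x l) = (\<Sum>l\<in>UNIV. m l * x l) + (\<Sum>l\<in>UNIV. (M$i$l - m l) * x l)"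
    by (simp add: sum.distrib[symmetric] algebra_simps)
  also have "(\<Sum>l\<in>UNIV. (M$i$l - m l) * x l) \<le> (\<Sum>l\<in>UNIV. (M$i$l - m l) * b)"
    by (rule sum_mono, rule mult_left_mono) (use bd in \<open>auto simp: m_def\<close>)
  also have "(\<Sum>l\<in>UNIV. (M$i$l - m l) * b) = (1 - s) * b"
    by (simp add: sum_distrib_right[symmetric] sum_subtractf r1 s_def)
  finally have u: "(\<Sum>l\<in>UNIV. M$i$l * x l) \<le> (\<Sum>l\<in>UNIV. m l * x l) + (1 - s) * b" by simp
  have "(\<Sum>l\<in>UNIV. M$k$l * x l) = (\<Sum>l\<in>UNIV. m l * x l) + (\<Sum>l\<in>UNIV. (M$k$l - m l) * x l)"
    by (simp add: sum.distrib[symmetric] algebra_simps)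
  moreover have "(\<Sum>l\<in>UNIV. (M$k$l - m l) * x l) \<ge> (\<Sum>l\<in>UNIV. (M$k$l - m l) * a)"
    by (rule sum_mono, rule mult_left_mono) (use bd in \<open>auto simp: m_def\<close>)
  moreover have "(\<Sum>l\<in>UNIV. (M$k$l - m l) * a) = (1 - s) * a"
    by (simp add: sum_distrib_right[symmetric] sum_subtractf r1 s_def)
  ultimately have v: "(\<Sum>l\<in>UNIV. M$k$l * x l) \<ge> (\<Sum>l\<in>UNIV. m l * x l) + (1 - s) * a" by simp
  have ab: "a \<le> b" using bd by (meson order_trans)
  have "c \<le> s" using c by (simp add: s_def m_def)
  hence "(1 - s) * (b - a) \<le> (1 - c) * (b - a)" using ab by (intro mult_right_mono) auto
  with u v show ?thesis by (simp add: algebra_simps)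
qed

lemma avg_bound:
  fixes M :: "real^'n::finite^'n" and x :: "'n \<Rightarrow> real"
  assumes st: "stochastic M" and bd: "\<forall>l. a \<le> x l \<and> x l \<le> b"
  shows "a \<le> (\<Sum>l\<in>UNIV. M$i$l * x l) \<and> (\<Sum>l\<in>UNIV. M$i$l * x l) \<le> b"
proof -
  have r1: "(\<Sum>l\<in>UNIV. M$i$l) = 1" and nn: "\<And>l. M$i$l \<ge> 0" using st unfolding stochastic_def by auto
  have "(\<Sum>l\<in>UNIV. M$i$l * x l) \<le> (\<Sum>l\<in>UNIV. M$i$l * b)"
    by (rule sum_mono, rule mult_left_mono) (use bd nn in auto)
  moreover have "(\<Sum>l\<in>UNIV. M$i$l * x l) \<ge> (\<Sum>l\<in>UNIV. M$i$l * a)"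
    by (rule sum_mono, rule mult_left_mono) (use bd nn in auto)
  ultimately show ?thesis by (simp add: sum_distrib_right[symmetric] r1)
qed




lemma col_conv:
  fixes x :: "nat \<Rightarrow> 'n::finite \<Rightarrow> real" and w :: "nat \<Rightarrow> nat"
  assumes step: "\<And>k. \<exists>M::real^'n^'n. stochastic M \<and> (\<forall>i. x (Suc k) i = (\<Sum>m\<in>UNIV. M$i$m * x k m))"
  and win: "\<And>r. \<exists>M::real^'n^'n. stochastic M \<and> (\<forall>i k. c \<le> (\<Sum>l\<in>UNIV. min (M$i$l) (M$k$l)))
      \<and> (\<forall>i. x (w (Suc r)) i = (\<Sum>m\<in>UNIV. M$i$m * x (w r) m))"
  and c: "0 < c" "c \<le> 1"
  shows "\<exists>L. \<forall>i. (\<lambda>k. x k i) \<longlonglongrightarrow> L"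
proof -
  define hi where "hi k = Max (range (x k))" for k
  define lo where "lo k = Min (range (x k))" for k
  have fin: "finite (range (x k))" "range (x k) \<noteq> {}" for k by auto
  have bd: "\<forall>l. lo k \<le> x k l \<and> x k l \<le> hi k" for k
    unfolding hi_def lo_def using fin by auto
  have hi_in: "\<exists>i. hi k = x k i" for k
  proof -
    have "Max (range (x k)) \<in> range (x k)" using Max_in[OF fin] .
    thus ?thesis unfolding hi_def by (metis imageE)
  qed
  have lo_in: "\<exists>i. lo k = x k i" for k
  proof -
    have "Min (range (x k)) \<in> range (x k)" using Min_in[OF fin] .
    thus ?thesis unfolding lo_def by (metis imageE)
  qed
  have hs: "hi (Suc k) \<le> hi k \<and> lo k \<le> lo (Suc k)" for k
  proof -
    obtain M :: "real^'n^'n" where M: "stochastic M" "\<forall>i. x (Suc k) i = (\<Sum>m\<in>UNIV. M$i$m * x k m)"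
      using step by blast
    obtain i where i: "hi (Suc k) = x (Suc k) i" using hi_in by blast
    obtain i' where i': "lo (Suc k) = x (Suc k) i'" using lo_in by blast
    show ?thesis using avg_bound[OF M(1) bd[of k], of i] avg_bound[OF M(1) bd[of k], of i'] i i' M(2) by auto
  qed
  have dhi: "decseq hi" by (rule decseq_SucI) (use hs in auto)
  have ilo: "incseq lo" by (rule incseq_SucI) (use hs in auto)
  define D where "D k = hi k - lo k" for k
  have Dnn: "D k \<ge> 0" for k unfolding D_def using bd[of k] by force
  have dD: "D n \<le> D m" if "m \<le> n" for m n
    unfolding D_def using dhi ilo that by (auto simp: decseq_def incseq_def intro: diff_mono)
  have contr_w: "D (w (Suc r)) \<le> (1-c) * D (w r)" for r
  proof -
    obtain M :: "real^'n^'n" where M: "stochastic M" "\<forall>i k. c \<le> (\<Sum>l\<in>UNIV. min (M$i$l) (M$k$l))"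
      "\<forall>i. x (w (Suc r)) i = (\<Sum>m\<in>UNIV. M$i$m * x (w r) m)"
      using win by blast
    obtain i where i: "hi (w (Suc r)) = x (w (Suc r)) i" using hi_in by blast
    obtain i' where i': "lo (w (Suc r)) = x (w (Suc r)) i'" using lo_in by blast
    have "(\<Sum>m\<in>UNIV. M$i$m * x (w r) m) - (\<Sum>m\<in>UNIV. M$i'$m * x (w r) m) \<le> (1-c) * (hi (w r) - lo (w r))"
      by (rule contr[OF M(1) bd]) (use M(2) in auto)
    thus ?thesis unfolding D_def i i' using M(3) by simp
  qed
  have geo: "D (w r) \<le> (1-c)^r * D (w 0)" for r
  proof (induction r)
    case 0 then show ?case by simp
  next
    case (Suc r)
    have "D (w (Suc r)) \<le> (1-c) * D (w r)" by (rule contr_w)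
    also have "\<dots> \<le> (1-c) * ((1-c)^r * D (w 0))" using Suc c by (intro mult_left_mono) auto
    finally show ?case by simp
  qed
  have D0: "D \<longlonglongrightarrow> 0"
  proof (rule LIMSEQ_I)
    fix e :: real assume e: "0 < e"
    have "(\<lambda>r. (1-c)^r * D (w 0)) \<longlonglongrightarrow> 0 * D (w 0)"
      by (intro tendsto_mult tendsto_const LIMSEQ_power_zero) (use c in auto)
    then obtain r0 where "\<forall>r\<ge>r0. norm ((1-c)^r * D (w 0) - 0) < e"
      using LIMSEQ_D[OF _ e] by fastforce
    hence r0: "(1-c)^r0 * D (w 0) < e" by auto
    show "\<exists>no. \<forall>n\<ge>no. norm (D n - 0) < e"
    proof (intro exI allI impI)
      fix n assume "w r0 \<le> n"
      hence "D n \<le> D (w r0)" by (rule dD)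
      with geo[of r0] r0 Dnn[of n] show "norm (D n - 0) < e" by auto
    qed
  qed
  obtain L where L: "hi \<longlonglongrightarrow> L"
    using decseq_convergent[OF dhi, of "lo 0"] bd ilo
    by (metis incseq_def order_trans zero_le)
  have "(\<lambda>k. hi k - D k) \<longlonglongrightarrow> L - 0" by (intro tendsto_diff L D0)
  hence Llo: "lo \<longlonglongrightarrow> L" unfolding D_def by simp
  show ?thesis
  proof (intro exI allI)
    fix i
    show "(\<lambda>k. x k i) \<longlonglongrightarrow> L"
      by (rule tendsto_sandwich[OF _ _ Llo L]) (use bd in auto)
  qed
qed




fun segp :: "(nat \<Rightarrow> real^'n::finite^'n) \<Rightarrow> nat \<Rightarrow> nat \<Rightarrow> real^'n^'n" where
  "segp P a 0 = mat 1"
| "segp P a (Suc m) = P (a + Suc m) ** segp P a m"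

lemma lprod_seg: "lprod P (a + m) = segp P a m ** lprod P a"
  by (induction m) (auto simp: matrix_mul_assoc)

lemma lprod_stoch: assumes "\<forall>k\<ge>1. stochastic (P k)" shows "stochastic (lprod P k)"
  by (induction k) (use assms in \<open>auto intro: stoch_mult stoch_mat1\<close>)

lemma prod_le_factor:
  fixes f :: "'a \<Rightarrow> real"
  assumes "finite U" "\<forall>p\<in>U. 0 \<le> f p \<and> f p \<le> 1" "q \<in> U"
  shows "prod f U \<le> f q"
proof -
  have "prod f U = f q * prod f (U - {q})" using assms by (simp add: prod.remove)
  also have "\<dots> \<le> f q * 1" using assms by (intro mult_left_mono prod_le_1) auto
  finally show ?thesis by simp
qed

lemma seg_count:
  fixes j :: "nat \<Rightarrow> nat"
  assumes j: "strict_mono j" and Q: "\<forall>k\<ge>1. P k \<in> Q"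
  shows "segp P a m \<in> Kset Q (range (\<lambda>r. P (j r))) m (card {r. a < j r \<and> j r \<le> a + m})"
proof (induction m)
  case 0
  have e: "{r. a < j r \<and> j r \<le> a + 0} = {}" by auto
  show ?case unfolding e card.empty by simp
next
  case (Suc m)
  let ?S = "range (\<lambda>r. P (j r))"
  let ?C = "{r. a < j r \<and> j r \<le> a + m}"
  have sub: "?C \<subseteq> {..a+m}"
  proof
    fix r assume "r \<in> ?C"
    hence "j r \<le> a + m" by simp
    moreover have "r \<le> j r" by (rule strict_mono_imp_increasing[OF j])
    ultimately show "r \<in> {..a+m}" by simp
  qed
  have finC: "finite ?C" by (rule finite_subset[OF sub]) simp
  have split: "{r. a < j r \<and> j r \<le> a + Suc m} = {r. j r = a + Suc m} \<union> ?C" by (auto simp: le_Suc_eq)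
  show ?case
  proof (cases "\<exists>r0. j r0 = a + Suc m")
    case True
    then obtain r0 where r0: "j r0 = a + Suc m" by blast
    have "j r = j r0 \<longleftrightarrow> r = r0" for r by (rule strict_mono_eq[OF j])
    hence "{r. j r = a + Suc m} = {r0}" unfolding r0[symmetric] by blast
    hence eq: "{r. a < j r \<and> j r \<le> a + Suc m} = insert r0 ?C" unfolding split by simp
    have "r0 \<notin> ?C" using r0 by simp
    hence cd: "card {r. a < j r \<and> j r \<le> a + Suc m} = Suc (card ?C)" unfolding eq using finC by simp
    have "P (a + Suc m) \<in> ?S" unfolding r0[symmetric] by (rule rangeI)
    hence "segp P a (Suc m) \<in> mprod ?S (Kset Q ?S m (card ?C))"
      unfolding segp.simps by (rule mprodI[OF _ Suc.IH])
    thus ?thesis unfolding cd Kset.simps(3) by (rule UnI2)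
  next
    case False
    hence "{r. j r = a + Suc m} = {}" by blast
    hence eq: "{r. a < j r \<and> j r \<le> a + Suc m} = ?C" unfolding split by simp
    have "P (a + Suc m) \<in> Q" using Q by simp
    hence h: "segp P a (Suc m) \<in> mprod Q (Kset Q ?S m (card ?C))"
      unfolding segp.simps by (rule mprodI[OF _ Suc.IH])
    show ?thesis unfolding eq
    proof (cases "card ?C")
      case 0 thus "segp P a (Suc m) \<in> Kset Q ?S (Suc m) (card ?C)" using h by simp
    next
      case (Suc n) thus "segp P a (Suc m) \<in> Kset Q ?S (Suc m) (card ?C)" using h by simp
    qed
  qed
qed

lemma gap_sum:
  fixes j :: "nat \<Rightarrow> nat"
  assumes j: "strict_mono j" and T: "\<forall>r. j (Suc r) - j r \<le> T"
  shows "j (a + m) - j a \<le> m * T"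
proof (induction m)
  case 0 then show ?case by simp
next
  case (Suc m)
  have "j a \<le> j (a + m)" "j (a + m) \<le> j (Suc (a + m))" using j by (auto simp: strict_mono_less_eq)
  moreover have "j (Suc (a + m)) - j (a + m) \<le> T" using T by blast
  ultimately show ?case using Suc by simp
qed

lemma count_window:
  fixes j :: "nat \<Rightarrow> nat" and q N :: nat
  assumes j: "strict_mono j"
  shows "card {r. j q < j r \<and> j r \<le> j q + (j (q + N) - j q)} = N"
proof -
  have "j q \<le> j (q + N)" using j by (simp add: strict_mono_less_eq)
  hence e: "j q + (j (q + N) - j q) = j (q + N)" by arith
  have "{r. j q < j r \<and> j r \<le> j (q + N)} = {q<..q+N}"
    using j by (auto simp: strict_mono_less strict_mono_less_eq)
  hence "{r. j q < j r \<and> j r \<le> j q + (j (q + N) - j q)} = {q<..q+N}" unfolding e .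
  thus ?thesis by simp
qed




theorem theorem6:
  fixes \<P> :: "(real^'n::finite^'n) set"
    and P :: "nat \<Rightarrow> real^'n^'n"
    and j :: "nat \<Rightarrow> nat"
  assumes "compact \<P>"
    and "\<forall>Q\<in>\<P>. classW Q"
    and "\<forall>k\<ge>1. P k \<in> \<P>"
    and "strict_mono j" and "j 0 \<ge> 1"
    and "\<forall>r. sarymsakov (P (j r))"
    and "compact (range (\<lambda>r. P (j r)))"
    and "\<exists>T::nat. \<forall>r. j (Suc r) - j r \<le> T"
  shows "\<exists>c::real^'n. (\<forall>i. c $ i \<ge> 0) \<and> (\<Sum>i\<in>UNIV. c $ i) = 1 \<and>
           (\<lambda>k. lprod P k) \<longlonglongrightarrow> (\<chi> i l. c $ l)"
proof -
  note A = assms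
  obtain T :: nat where T: "\<forall>r. j (Suc r) - j r \<le> T" using A(8) by blast
  define N where "N = CARD('n)"
  define S where "S = range (\<lambda>r. P (j r))"
  have Qp: "\<forall>M\<in>\<P>. stochastic M \<and> expd 0 M" using A(2) expd_W classW_def by blast
  have Sp: "\<forall>M\<in>S. stochastic M \<and> expd 1 M" using A(6) expd_S sarymsakov_def S_def by blast
  have Pst: "\<forall>k\<ge>1. stochastic (P k)" using A(3) Qp by blast
  define Kall where "Kall = (\<Union>L\<in>{..N*T}. Kset \<P> S L N)"
  have cK: "compact Kall" unfolding Kall_def
    by (intro compact_UN finite_atMost compact_Kset A(1)) (use A(7) S_def in auto)
  have Kp: "stochastic M \<and> (\<forall>i k. \<exists>l. M$i$l > 0 \<and> M$k$l > 0)" if MK: "M \<in> Kall" for M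
  proof -
    obtain L where "M \<in> Kset \<P> S L N" using MK unfolding Kall_def by blast
    hence "stochastic M \<and> expd N M" using Kset_prop[OF Qp Sp] by blast
    thus ?thesis using expd_scr N_def by blast
  qed
  define hf where "hf M = (\<Prod>p\<in>UNIV. \<Sum>l\<in>UNIV. M $ fst p $ l * M $ snd p $ l)" for M :: "real^'n^'n"
  have hcont: "continuous_on Kall hf" unfolding hf_def by (intro continuous_intros)
  have hpos: "hf M > 0" if MK: "M \<in> Kall" for M
    unfolding hf_def
  proof (rule prod_pos)
    fix p :: "'n \<times> 'n"
    obtain l where l: "M $ fst p $ l > 0" "M $ snd p $ l > 0" using Kp[OF MK] by blast
    have nn: "\<forall>i k. M $ i $ k \<ge> 0" using Kp[OF MK] unfolding stochastic_def by blast
    show "0 < (\<Sum>l\<in>UNIV. M $ fst p $ l * M $ snd p $ l)"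
      by (rule sum_pos2[of UNIV l]) (use l nn in auto)
  qed
  obtain c0 where c0: "c0 > 0" "\<forall>M\<in>Kall. c0 \<le> hf M"
  proof (cases "Kall = {}")
    case True thus ?thesis using that[of 1] by auto
  next
    case False
    obtain M0 where "M0 \<in> Kall" "\<forall>M\<in>Kall. hf M0 \<le> hf M"
      using continuous_attains_inf[OF cK False hcont] by blast
    thus ?thesis using that[of "hf M0"] hpos by auto
  qed
  define c where "c = min c0 1"
  have c: "0 < c" "c \<le> 1" using c0 unfolding c_def by auto
  have Kc: "c \<le> (\<Sum>l\<in>UNIV. min (M$i$l) (M$k$l))" if MK: "M \<in> Kall" for M i k
  proof -
    have st: "stochastic M" using Kp[OF MK] by blast
    have nn: "\<And>i k. M $ i $ k \<ge> 0" and le1: "\<And>i k. M $ i $ k \<le> 1"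
      using st stoch_le1 unfolding stochastic_def by auto
    have fac: "\<forall>p\<in>UNIV. 0 \<le> (\<Sum>l\<in>UNIV. M $ fst p $ l * M $ snd p $ l) \<and> (\<Sum>l\<in>UNIV. M $ fst p $ l * M $ snd p $ l) \<le> 1"
    proof
      fix p :: "'n \<times> 'n"
      have "(\<Sum>l\<in>UNIV. M $ fst p $ l * M $ snd p $ l) \<le> (\<Sum>l\<in>UNIV. M $ fst p $ l)"
        by (rule sum_mono) (use nn le1 in \<open>simp add: mult_left_le\<close>)
      also have "\<dots> = 1" using st unfolding stochastic_def by blast
      finally show "0 \<le> (\<Sum>l\<in>UNIV. M $ fst p $ l * M $ snd p $ l) \<and> (\<Sum>l\<in>UNIV. M $ fst p $ l * M $ snd p $ l) \<le> 1"
        using nn by (auto intro: sum_nonneg)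
    qed
    have "c \<le> hf M" using c0 MK unfolding c_def by fastforce
    also have "hf M \<le> (\<Sum>l\<in>UNIV. M $ fst (i,k) $ l * M $ snd (i,k) $ l)"
      unfolding hf_def by (rule prod_le_factor[OF _ fac]) auto
    also have "\<dots> \<le> (\<Sum>l\<in>UNIV. min (M$i$l) (M$k$l))"
    proof (rule sum_mono)
      fix l
      have "M$i$l * M$k$l \<le> M$i$l" "M$i$l * M$k$l \<le> M$k$l"
        using nn le1 by (auto simp: mult_left_le mult_left_le_one_le)
      thus "M $ fst (i,k) $ l * M $ snd (i,k) $ l \<le> min (M$i$l) (M$k$l)" by simp
    qed
    finally show ?thesis .
  qed
  define w where "w r = j (r * N)" for r
  define Mw where "Mw r = segp P (w r) (w (Suc r) - w r)" for r
  have wmono: "w r \<le> w (Suc r)" for r unfolding w_def using A(4) by (simp add: strict_mono_less_eq)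
  have Mw_K: "Mw r \<in> Kall" for r
  proof -
    have ws: "w (Suc r) = j (r * N + N)" unfolding w_def by (simp add: add.commute)
    have len: "w (Suc r) - w r \<le> N * T" unfolding ws using gap_sum[OF A(4) T, of "r*N" N] w_def by (simp add: mult.commute)
    have "Mw r \<in> Kset \<P> S (w (Suc r) - w r) (card {r'. w r < j r' \<and> j r' \<le> w r + (w (Suc r) - w r)})"
      unfolding Mw_def S_def by (rule seg_count[OF A(4) A(3)])
    moreover have "card {r'. w r < j r' \<and> j r' \<le> w r + (w (Suc r) - w r)} = N"
      unfolding ws using count_window[OF A(4), of "r*N" N] w_def by simp
    ultimately show ?thesis unfolding Kall_def using len by auto
  qed
  have Mw_eq: "lprod P (w (Suc r)) = Mw r ** lprod P (w r)" for r
    unfolding Mw_def using lprod_seg[of P "w r" "w (Suc r) - w r"] wmono[of r] by simp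
  have col: "\<exists>L. \<forall>i. (\<lambda>k. lprod P k $ i $ l) \<longlonglongrightarrow> L" for l
  proof (rule col_conv[where x = "\<lambda>k i. lprod P k $ i $ l" and w = w and c = c, OF _ _ c])
    fix k
    show "\<exists>M::real^'n^'n. stochastic M \<and> (\<forall>i. lprod P (Suc k) $ i $ l = (\<Sum>m\<in>UNIV. M$i$m * lprod P k $ m $ l))"
      by (rule exI[of _ "P (Suc k)"]) (use Pst in \<open>auto simp: mm_entry\<close>)
  next
    fix r
    show "\<exists>M::real^'n^'n. stochastic M \<and> (\<forall>i k. c \<le> (\<Sum>l\<in>UNIV. min (M$i$l) (M$k$l)))
      \<and> (\<forall>i. lprod P (w (Suc r)) $ i $ l = (\<Sum>m\<in>UNIV. M$i$m * lprod P (w r) $ m $ l))"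
      by (rule exI[of _ "Mw r"]) (use Kp[OF Mw_K] Kc[OF Mw_K] Mw_eq in \<open>auto simp: mm_entry\<close>)
  qed
  obtain Lf where Lf: "\<And>l i. (\<lambda>k. lprod P k $ i $ l) \<longlonglongrightarrow> Lf l" using col by metis
  define cv where "cv = (\<chi> l. Lf l)"
  have lst: "stochastic (lprod P k)" for k using lprod_stoch[OF Pst] .
  have nonneg: "cv $ l \<ge> 0" for l
  proof -
    obtain i :: 'n where True by blast
    have li: "(\<lambda>k. lprod P k $ i $ l) \<longlonglongrightarrow> Lf l" using Lf by blast
    show ?thesis unfolding cv_def using LIMSEQ_le_const[OF li, of 0] lst unfolding stochastic_def by auto
  qed
  have sum1: "(\<Sum>l\<in>UNIV. cv $ l) = 1"
  proof -
    obtain i :: 'n where True by blast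
    have "(\<lambda>k. \<Sum>l\<in>UNIV. lprod P k $ i $ l) \<longlonglongrightarrow> (\<Sum>l\<in>UNIV. Lf l)" by (intro tendsto_sum Lf)
    moreover have "(\<lambda>k. \<Sum>l\<in>UNIV. lprod P k $ i $ l) = (\<lambda>k. 1)" using lst unfolding stochastic_def by auto
    ultimately have "(\<lambda>k. 1::real) \<longlonglongrightarrow> (\<Sum>l\<in>UNIV. Lf l)" by simp
    hence "(\<Sum>l\<in>UNIV. Lf l) = 1" using LIMSEQ_unique tendsto_const by blast
    thus ?thesis unfolding cv_def by simp
  qed
  have lim: "(\<lambda>k. lprod P k) \<longlonglongrightarrow> (\<chi> i l. cv $ l)"
  proof (rule vec_tendstoI)
    fix i
    show "(\<lambda>k. lprod P k $ i) \<longlonglongrightarrow> (\<chi> i l. cv $ l) $ i"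
    proof (rule vec_tendstoI)
      fix l
      show "(\<lambda>k. lprod P k $ i $ l) \<longlonglongrightarrow> (\<chi> i l. cv $ l) $ i $ l"
        using Lf unfolding cv_def by simp
    qed
  qed
  show ?thesis using nonneg sum1 lim by blast
qed


end
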